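(* Consider the networked $SIRS$-$V_o$ system without media actuator (i.e. $m\equiv 0$) described in the context, with initial condition at time $t_0$ satisfying $o_i(t_0),s_i(t_0),x_i(t_0),r_i(t_0),v_i(t_0)\in[0,1]$ and $s_i(t_0)+x_i(t_0)+r_i(t_0)+v_i(t_0)=1$ for all $i\in[n]$. Then for all $t>t_0$ and all $i\in[n]$: $s_i(t)+x_i(t)+r_i(t)+v_i(t)=1$ and $s_i(t),x_i(t),r_i(t),v_i(t)\in[0,1]$.
   Context: There are $n$ nodes, $[n]=\{1,\dots,n\}$. All parameters are real and nonnegative: $a_{ij}$ (opinion-network weights), $\beta_{ij}$ (infection rates), $\gamma_i$ (recovery rates), $\omega_i$ (loss of natural immunity rates), $\delta_i$ (loss of vaccine immunity rates), $\eta^{\min}_{ij}$ and $\Delta\eta_{ij}$ (strategy-imitation rates). Let $A=[a_{ij}]$, $B=[\beta_{ij}]$, $H_{\min}=[\eta^{\min}_{ij}]$, $\Delta H=[\Delta\eta_{ij}]$. For a square matrix $M$, $k_i[M]=\sum_j M_{ij}$, $\widetilde K[M]=\mathrm{diag}(k_1[M],\dots,k_n[M])$ and $L[M]=\widetilde K[M]-M$. Let $\widetilde G=\mathrm{diag}(\gamma_i)$, $\widetilde W=\mathrm{diag}(\omega_i)$, $\widetilde D=\mathrm{diag}(\delta_i)$, and for $o\in\mathbb{R}^n$ let $H(o)=\mathrm{diag}(o)\Delta H+H_{\min}$. The state is $(o,s,x,r,v)\in(\mathbb{R}^n)^5$ (opinion on disease seriousness, susceptible, infected, recovered, vaccinated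 fractions), with $\widetilde S=\mathrm{diag}(s)$, $\widetilde R=\mathrm{diag}(r)$, and dynamics $\dot o=A(x-o)-2L[A]o$, $\dot s=\widetilde Dv-\widetilde S(Bx+H(o)v)+\widetilde Wr$, $\dot x=\widetilde SBx-\widetilde Gx$, $\dot r=\widetilde Gx-\widetilde Wr-\widetilde RH(o)v$, $\dot v=(\widetilde S+\widetilde R)H(o)v-\widetilde Dv$. *)

theory Defs
  imports "HOL-Analysis.Analysis"
begin

text \<open>Nodes are the elements of a finite type 'n (so n = CARD('n)).
  Vectors are real^'n, matrices real^'n^'n.\<close>

definition diagm :: "real^'n \<Rightarrow> real^'n^'n" where
  "diagm d = (\<chi> i j. if i = j then d$i else 0)"

definition kdeg :: "real^'n^'n::finite \<Rightarrow> 'n \<Rightarrow> real" where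
  "kdeg M i = (\<Sum>j\<in>UNIV. M$i$j)"

definition Kmat :: "real^'n^'n::finite \<Rightarrow> real^'n^'n" where
  "Kmat M = diagm (\<chi> i. kdeg M i)"

definition Lap :: "real^'n^'n::finite \<Rightarrow> real^'n^'n" where
  "Lap M = Kmat M - M"

definition Hmat :: "real^'n^'n \<Rightarrow> real^'n^'n \<Rightarrow> real^'n \<Rightarrow> real^'n^'n" where
  "Hmat Hmin DH ov = diagm ov ** DH + Hmin"

definition sirsvo_solution ::
  "real^'n^'n::finite \<Rightarrow> real^'n^'n \<Rightarrow> real^'n \<Rightarrow> real^'n \<Rightarrow> real^'n \<Rightarrow>
   real^'n^'n \<Rightarrow> real^'n^'n \<Rightarrow> real \<Rightarrow>
   (real \<Rightarrow> real^'n) \<Rightarrow> (real \<Rightarrow> real^'n) \<Rightarrow> (real \<Rightarrow> real^'n) \<Rightarrow>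
   (real \<Rightarrow> real^'n) \<Rightarrow> (real \<Rightarrow> real^'n) \<Rightarrow> bool" where
  "sirsvo_solution A B \<gamma> \<omega> \<delta> Hmin DH t0 op s x r v \<longleftrightarrow>
    (\<forall>t\<ge>t0.
      (op has_vector_derivative (A *v (x t - op t) - 2 *\<^sub>R (Lap A *v op t))) (at t within {t0..}) \<and>
      (s has_vector_derivative
         (diagm \<delta> *v v t - diagm (s t) *v (B *v x t + Hmat Hmin DH (op t) *v v t) + diagm \<omega> *v r t))
         (at t within {t0..}) \<and>
      (x has_vector_derivative (diagm (s t) *v (B *v x t) - diagm \<gamma> *v x t)) (at t within {t0..}) \<and>
      (r has_vector_derivative
         (diagm \<gamma> *v x t - diagm \<omega> *v r t - diagm (r t) *v (Hmat Hmin DH (op t) *v v t)))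
         (at t within {t0..}) \<and>
      (v has_vector_derivative
         ((diagm (s t) + diagm (r t)) *v (Hmat Hmin DH (op t) *v v t) - diagm \<delta> *v v t))
         (at t within {t0..}))"

end

theory Submission
  imports Defs
begin


lemma comp_deriv:
  fixes f :: "real \<Rightarrow> real^'n"
  assumes "(f has_vector_derivative D) (at t within S)"
  shows "((\<lambda>t. f t $ i) has_real_derivative D $ i) (at t within S)"
  using bounded_linear.has_vector_derivative[OF bounded_linear_vec_nth assms]
  by (simp add: has_real_derivative_iff_has_vector_derivative)

lemma invariance:
  fixes y f :: "'k \<Rightarrow> real \<Rightarrow> real" and K :: "'k set"
  assumes fin: "finite K"
  and der: "\<And>k t. k \<in> K \<Longrightarrow> t \<ge> t0 \<Longrightarrow> (y k has_real_derivative f k t) (at t within {t0..})"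
  and init: "\<And>k. k \<in> K \<Longrightarrow> y k t0 \<ge> 0"
  and qp: "\<And>R k. R \<ge> 0 \<Longrightarrow> k \<in> K \<Longrightarrow> \<exists>C\<ge>0. \<forall>t\<ge>t0. \<forall>\<epsilon>\<ge>0.
      (\<forall>j\<in>K. -\<epsilon> \<le> y j t \<and> \<bar>y j t\<bar> \<le> R) \<longrightarrow> y k t \<le> 0 \<longrightarrow> -C*\<epsilon> \<le> f k t"
  and kK: "k \<in> K" and tt: "t \<ge> t0"
  shows "y k t \<ge> 0"
proof -
  have cont: "continuous_on {t0..} (y j)" if "j \<in> K" for j
    using der[OF that] DERIV_continuous continuous_on_eq_continuous_within
    by (metis atLeast_iff)
  have contI: "continuous_on I (y j)" if "j \<in> K" "I \<subseteq> {t0..}" for j I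
    using cont[OF that(1)] continuous_on_subset that(2) by blast
  have "compact (\<Union>j\<in>K. y j ` {t0..t})"
    using fin contI by (intro compact_UN compact_continuous_image) auto
  then obtain a where a: "\<forall>z\<in>(\<Union>j\<in>K. y j ` {t0..t}). \<bar>z\<bar> \<le> a"
    using compact_imp_bounded bounded_real by metis
  define R where "R = max a 0"
  have R0: "R \<ge> 0" unfolding R_def by simp
  have Rb: "\<bar>y j \<tau>\<bar> \<le> R" if "j \<in> K" "\<tau> \<in> {t0..t}" for j \<tau>
  proof -
    have "y j \<tau> \<in> (\<Union>j\<in>K. y j ` {t0..t})" using that by blast
    hence "\<bar>y j \<tau>\<bar> \<le> a" using a by blast
    thus ?thesis unfolding R_def by simp
  qed
  define P where "P j c \<longleftrightarrow> c \<ge> 0 \<and> (\<forall>t\<ge>t0. \<forall>\<epsilon>\<ge>0.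
      (\<forall>i\<in>K. -\<epsilon> \<le> y i t \<and> \<bar>y i t\<bar> \<le> R) \<longrightarrow> y j t \<le> 0 \<longrightarrow> -c*\<epsilon> \<le> f j t)" for j c
  have ex: "\<forall>j\<in>K. \<exists>c. P j c"
  proof
    fix j assume "j \<in> K"
    from qp[OF R0 this] obtain c where "c \<ge> 0" "\<forall>t\<ge>t0. \<forall>\<epsilon>\<ge>0.
      (\<forall>i\<in>K. -\<epsilon> \<le> y i t \<and> \<bar>y i t\<bar> \<le> R) \<longrightarrow> y j t \<le> 0 \<longrightarrow> -c*\<epsilon> \<le> f j t"
      by blast
    thus "\<exists>c. P j c" unfolding P_def by blast
  qed
  obtain Cf where CfP: "\<forall>j\<in>K. P j (Cf j)" using bchoice[OF ex] by (elim exE) 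
  have Cf: "\<forall>j\<in>K. Cf j \<ge> 0 \<and> (\<forall>t\<ge>t0. \<forall>\<epsilon>\<ge>0.
      (\<forall>i\<in>K. -\<epsilon> \<le> y i t \<and> \<bar>y i t\<bar> \<le> R) \<longrightarrow> y j t \<le> 0 \<longrightarrow> -Cf j*\<epsilon> \<le> f j t)"
    using CfP unfolding P_def by simp
  define C where "C = sum Cf K + 1"
  have C1: "C \<ge> 1" unfolding C_def using Cf fin by (simp add: sum_nonneg)
  have CC: "Cf j \<le> C" if "j \<in> K" for j
  proof -
    have "Cf j \<le> sum Cf K" using Cf fin that by (intro member_le_sum) auto
    thus ?thesis unfolding C_def by simp
  qed
  have qpC: "-C*\<epsilon> \<le> f j \<tau>" if "j \<in> K" "\<tau> \<ge> t0" "\<epsilon> \<ge> 0"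
    "\<forall>i\<in>K. -\<epsilon> \<le> y i \<tau> \<and> \<bar>y i \<tau>\<bar> \<le> R" "y j \<tau> \<le> 0" for j \<tau> \<epsilon>
  proof -
    have "Cf j \<ge> 0 \<and> (\<forall>t\<ge>t0. \<forall>\<epsilon>\<ge>0.
      (\<forall>i\<in>K. -\<epsilon> \<le> y i t \<and> \<bar>y i t\<bar> \<le> R) \<longrightarrow> y j t \<le> 0 \<longrightarrow> -Cf j*\<epsilon> \<le> f j t)"
      using Cf that(1) by (rule bspec)
    hence "-Cf j*\<epsilon> \<le> f j \<tau>" using that(2-5) by blast
    moreover have "-C*\<epsilon> \<le> -Cf j*\<epsilon>" using CC[OF that(1)] that(3)
      by (simp add: mult_right_mono)
    ultimately show ?thesis by linarith
  qed
  define h where "h = 1/(2*C)"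
  have h0: "h > 0" unfolding h_def using C1 by simp
  have Ch: "C*h = 1/2" unfolding h_def using C1 by simp
  have claim: "\<forall>\<tau>\<in>{t0..t}. \<tau> \<le> t0 + real n*h \<longrightarrow> (\<forall>j\<in>K. y j \<tau> \<ge> 0)" for n
  proof (induction n)
    case 0
    then show ?case using init by auto
  next
    case (Suc n)
    show ?case
    proof (intro ballI impI, rule ccontr)
      fix \<tau> j assume \<tau>: "\<tau> \<in> {t0..t}" "\<tau> \<le> t0 + real (Suc n) * h" and j: "j \<in> K"
        and neg0: "\<not> 0 \<le> y j \<tau>"
      define T where "T = t0 + real n * h"
      have Tt0: "T \<ge> t0" unfolding T_def using h0 by simp
      have Tlt: "T < \<tau>"
      proof (rule ccontr)
        assume "\<not> T < \<tau>"
        hence "\<tau> \<le> t0 + real n*h" unfolding T_def by simp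
        thus False using Suc.IH \<tau>(1) j neg0 by blast
      qed
      have \<tau>T: "\<tau> - T \<le> h" using \<tau> unfolding T_def by (simp add: algebra_simps)
      have ST: "{T..\<tau>} \<subseteq> {t0..t}" using Tt0 \<tau> by auto
      have yT: "y i T \<ge> 0" if "i \<in> K" for i
      proof -
        have "T \<in> {t0..t}" using Tt0 Tlt \<tau> by auto
        thus ?thesis using Suc.IH[rule_format, of T i] that unfolding T_def by simp
      qed
      have "compact (\<Union>i\<in>K. y i ` {T..\<tau>})"
        using fin contI ST Tt0 by (intro compact_UN compact_continuous_image) auto
      moreover have "(\<Union>i\<in>K. y i ` {T..\<tau>}) \<noteq> {}" using j Tlt by auto
      ultimately obtain m where m: "m \<in> (\<Union>i\<in>K. y i ` {T..\<tau>})"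
        and mle: "\<forall>z\<in>(\<Union>i\<in>K. y i ` {T..\<tau>}). m \<le> z"
        using compact_attains_inf by metis
      obtain k1 t1 where k1: "k1 \<in> K" and t1: "t1 \<in> {T..\<tau>}" and mdef: "m = y k1 t1"
        using m by auto
      define \<epsilon> where "\<epsilon> = - m"
      have "y j \<tau> \<in> (\<Union>i\<in>K. y i ` {T..\<tau>})" using j Tlt by (intro UN_I[OF j] imageI) auto
      hence "m \<le> y j \<tau>" using mle by blast
      hence \<epsilon>0: "\<epsilon> > 0" using neg0 unfolding \<epsilon>_def by simp
      have lowb: "-\<epsilon> \<le> y i \<sigma>" if "i \<in> K" "\<sigma> \<in> {T..\<tau>}" for i \<sigma>
      proof -
        have "y i \<sigma> \<in> (\<Union>i\<in>K. y i ` {T..\<tau>})" using that by blast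
        hence "m \<le> y i \<sigma>" using mle by blast
        thus ?thesis unfolding \<epsilon>_def by simp
      qed
      define Z where "Z = {T..t1} \<inter> y k1 -` {0..}"
      have Zc: "closed Z" unfolding Z_def
        using t1 ST by (intro continuous_closed_preimage contI[OF k1]) auto
      have TZ: "T \<in> Z" unfolding Z_def using yT[OF k1] t1 by auto
      have Zb: "bdd_above Z" unfolding Z_def by auto
      define t2 where "t2 = Sup Z"
      have t2Z: "t2 \<in> Z" unfolding t2_def using closed_contains_Sup[OF _ Zb Zc] TZ by auto
      have yt2: "y k1 t2 \<ge> 0" and t2r: "T \<le> t2" "t2 \<le> t1" using t2Z unfolding Z_def by auto
      have yt1: "y k1 t1 < 0" using \<epsilon>0 mdef unfolding \<epsilon>_def by simp
      have t21: "t2 < t1" using t2r yt1 yt2 by (cases "t2 = t1") auto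
      have negmid: "y k1 \<sigma> < 0" if "t2 < \<sigma>" "\<sigma> \<le> t1" for \<sigma>
      proof (rule ccontr)
        assume "\<not> y k1 \<sigma> < 0"
        hence "\<sigma> \<in> Z" unfolding Z_def using that t2r by auto
        hence "\<sigma> \<le> t2" unfolding t2_def using Zb by (simp add: cSup_upper)
        thus False using that by simp
      qed
      have dif: "y k1 differentiable (at z)" if "t2 < z" "z < t1" for z
      proof -
        have "z \<in> interior {t0..}" using that t2r Tt0 by auto
        hence "at z within {t0..} = at z" by (rule at_within_interior)
        moreover have "(y k1 has_real_derivative f k1 z) (at z within {t0..})"
          using der[OF k1] that t2r Tt0 by simp
        ultimately have "(y k1 has_real_derivative f k1 z) (at z)" by simp
        thus ?thesis unfolding real_differentiable_def by blast
      qed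
      obtain l z where z: "t2 < z" "z < t1" and dz: "DERIV (y k1) z :> l"
        and eq: "y k1 t1 - y k1 t2 = (t1 - t2) * l"
        using MVT[OF t21 contI[OF k1] dif] t2r Tt0 by auto
      have "z \<in> interior {t0..}" using z t2r Tt0 by auto
      hence "at z within {t0..} = at z" by (rule at_within_interior)
      moreover have "(y k1 has_real_derivative f k1 z) (at z within {t0..})"
        using der[OF k1] z t2r Tt0 by simp
      ultimately have "(y k1 has_real_derivative f k1 z) (at z)" by simp
      hence "l = f k1 z" using dz DERIV_unique by blast
      moreover have "-C*\<epsilon> \<le> f k1 z"
      proof (rule qpC[OF k1])
        show "z \<ge> t0" using z t2r Tt0 by simp
        show "\<epsilon> \<ge> 0" using \<epsilon>0 by simp
        show "\<forall>i\<in>K. - \<epsilon> \<le> y i z \<and> \<bar>y i z\<bar> \<le> R"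
        proof
          fix i assume i: "i \<in> K"
          have zz: "z \<in> {T..\<tau>}" using z t2r t1 by auto
          hence "z \<in> {t0..t}" using ST by blast
          thus "- \<epsilon> \<le> y i z \<and> \<bar>y i z\<bar> \<le> R" using lowb[OF i zz] Rb[OF i] by blast
        qed
        show "y k1 z \<le> 0" using negmid z by fastforce
      qed
      ultimately have "(t1 - t2) * (-C*\<epsilon>) \<le> y k1 t1 - y k1 t2"
        using eq t21 mult_left_mono[of "-C*\<epsilon>" "f k1 z" "t1-t2"] by simp
      moreover have "h * (-C*\<epsilon>) \<le> (t1 - t2) * (-C*\<epsilon>)"
        using t2r t1 \<tau>T C1 \<epsilon>0 by (intro mult_right_mono_neg) auto
      moreover have "h * (-C*\<epsilon>) = -\<epsilon>/2" using Ch by (simp add: algebra_simps)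
      ultimately have "-\<epsilon>/2 \<le> y k1 t1" using yt2 by linarith
      thus False using yt1 mdef \<epsilon>_def \<epsilon>0 by simp
    qed
  qed
  obtain n :: nat where "(t - t0)/h < n" using reals_Archimedean2 by blast
  hence "t \<le> t0 + real n * h" using h0 by (simp add: field_simps)
  thus ?thesis using claim[of n] kK tt by auto
qed



lemma diag_comp[simp]: "(diagm d *v w) $ i = d $ i * w $ i"
proof -
  have "(\<Sum>j\<in>UNIV. (if i = j then d$i else 0) * w$j) = (\<Sum>j\<in>UNIV. if i = j then d$i * w$j else 0)"
    by (rule sum.cong) auto
  thus ?thesis unfolding diagm_def matrix_vector_mult_def by simp
qed

lemma diag_add: "diagm a + diagm b = diagm (a + b)"
  unfolding diagm_def by (simp add: vec_eq_iff)

lemma lap_comp: "(Lap A *v w) $ i = kdeg A i * w $ i - (A *v w) $ i"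
  unfolding Lap_def Kmat_def by (simp add: matrix_vector_mult_diff_rdistrib)

lemma hmat_comp: "(Hmat Hmin DH ov *v w) $ i = ov $ i * (DH *v w) $ i + (Hmin *v w) $ i"
  unfolding Hmat_def by (simp add: matrix_vector_mult_add_rdistrib matrix_vector_mul_assoc[symmetric])

lemma mv_comp: "(M *v w) $ i = (\<Sum>j\<in>UNIV. M$i$j * w$j)"
  unfolding matrix_vector_mult_def by simp

lemma mv_lb:
  fixes M :: "real^'n^'n::finite"
  assumes "\<forall>i j. M$i$j \<ge> 0" "\<forall>j. -e \<le> w$j"
  shows "-(kdeg M i)*e \<le> (M *v w) $ i"
proof -
  have "(\<Sum>j\<in>UNIV. M$i$j * (-e)) \<le> (\<Sum>j\<in>UNIV. M$i$j * w$j)"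
    using assms by (intro sum_mono mult_left_mono) auto
  thus ?thesis unfolding mv_comp kdeg_def by (simp add: sum_distrib_right sum_negf)
qed

lemma mv_ub:
  fixes M :: "real^'n^'n::finite"
  assumes "\<forall>i j. M$i$j \<ge> 0" "\<forall>j. \<bar>w$j\<bar> \<le> R"
  shows "\<bar>(M *v w) $ i\<bar> \<le> kdeg M i * R"
proof -
  have "\<bar>\<Sum>j\<in>UNIV. M$i$j * w$j\<bar> \<le> (\<Sum>j\<in>UNIV. \<bar>M$i$j * w$j\<bar>)" by (rule sum_abs)
  also have "\<dots> \<le> (\<Sum>j\<in>UNIV. M$i$j * R)"
    using assms by (intro sum_mono) (simp add: abs_mult mult_left_mono)
  finally show ?thesis unfolding mv_comp kdeg_def by (simp add: sum_distrib_right)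
qed

lemma kdeg_nn: "\<forall>i j. M$i$j \<ge> 0 \<Longrightarrow> kdeg M i \<ge> 0"
  unfolding kdeg_def by (simp add: sum_nonneg)

lemma prod_lb:
  fixes p q a b P Q :: real
  assumes "-a \<le> p" "\<bar>p\<bar> \<le> P" "-b \<le> q" "\<bar>q\<bar> \<le> Q" "a \<ge> 0" "b \<ge> 0"
  shows "-(a*Q + b*P) \<le> p*q"
proof (cases "p \<ge> 0")
  case True
  show ?thesis
  proof (cases "q \<ge> 0")
    case True
    thus ?thesis using \<open>p \<ge> 0\<close> assms by (smt (verit) mult_nonneg_nonneg)
  next
    case False
    have "-(p*b) \<le> p*q" using True assms mult_left_mono[of "-b" q p] by simp
    moreover have "p * b \<le> b * P" using assms True mult_right_mono[of p P b] by (simp add: mult.commute)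
    moreover have "a*Q \<ge> 0" using assms by simp
    ultimately show ?thesis by linarith
  qed
next
  case False
  show ?thesis
  proof (cases "q \<ge> 0")
    case True
    have "-(a * q) \<le> p*q" using True assms mult_right_mono[of "-a" p q] by simp
    moreover have "a*q \<le> a*Q" using assms True mult_left_mono[of q Q a] by simp
    moreover have "b*P \<ge> 0" using assms by simp
    ultimately show ?thesis by linarith
  next
    case False
    hence "p*q \<ge> 0" using \<open>\<not> p \<ge> 0\<close> by (simp add: zero_le_mult_iff)
    moreover have "a*Q + b*P \<ge> 0" using assms by simp
    ultimately show ?thesis by simp
  qed
qed



lemma hv_bounds:
  fixes Hmin DH :: "real^'n^'n::finite" and ov v :: "real^'n"
  assumes H1: "\<forall>i j. Hmin$i$j \<ge> 0" and H2: "\<forall>i j. DH$i$j \<ge> 0"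
    and e: "e \<ge> 0" and R: "R \<ge> 0"
    and bo: "\<forall>i. -e \<le> ov$i \<and> \<bar>ov$i\<bar> \<le> R"
    and bv: "\<forall>i. -e \<le> v$i \<and> \<bar>v$i\<bar> \<le> R"
  shows "-((2*kdeg DH i*R + kdeg Hmin i)*e) \<le> (Hmat Hmin DH ov *v v)$i"
    and "\<bar>(Hmat Hmin DH ov *v v)$i\<bar> \<le> kdeg DH i*R*R + kdeg Hmin i*R"
proof -
  have kD: "kdeg DH i \<ge> 0" and kH: "kdeg Hmin i \<ge> 0" using kdeg_nn H1 H2 by blast+
  have l1: "-(kdeg DH i)*e \<le> (DH *v v)$i" using mv_lb[OF H2] bv by blast
  have u1: "\<bar>(DH *v v)$i\<bar> \<le> kdeg DH i * R" using mv_ub[OF H2] bv by blast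
  have l2: "-(kdeg Hmin i)*e \<le> (Hmin *v v)$i" using mv_lb[OF H1] bv by blast
  have u2: "\<bar>(Hmin *v v)$i\<bar> \<le> kdeg Hmin i * R" using mv_ub[OF H1] bv by blast
  have "-(e*(kdeg DH i * R) + (kdeg DH i*e)*R) \<le> ov$i * (DH *v v)$i"
    using bo l1 u1 e kD by (intro prod_lb) auto
  thus "-((2*kdeg DH i*R + kdeg Hmin i)*e) \<le> (Hmat Hmin DH ov *v v)$i"
    unfolding hmat_comp using l2 by (simp add: algebra_simps)
  have "\<bar>ov$i * (DH *v v)$i\<bar> \<le> R * (kdeg DH i * R)"
    unfolding abs_mult using bo u1 R by (intro mult_mono) auto
  thus "\<bar>(Hmat Hmin DH ov *v v)$i\<bar> \<le> kdeg DH i*R*R + kdeg Hmin i*R"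
    unfolding hmat_comp using u2 by (simp add: algebra_simps abs_triangle_ineq order_trans[OF abs_triangle_ineq])
qed

locale bnds =
  fixes A B Hmin DH :: "real^'n^'n::finite"
    and \<gamma> \<omega> \<delta> :: "real^'n" and e R :: real and ov s x r v :: "real^'n"
  assumes A: "\<forall>i j. A$i$j \<ge> 0" and B: "\<forall>i j. B$i$j \<ge> 0"
    and H1: "\<forall>i j. Hmin$i$j \<ge> 0" and H2: "\<forall>i j. DH$i$j \<ge> 0"
    and g: "\<forall>i. \<gamma>$i \<ge> 0" and w: "\<forall>i. \<omega>$i \<ge> 0" and d: "\<forall>i. \<delta>$i \<ge> 0"
    and e: "e \<ge> 0" and R: "R \<ge> 0"
    and bo: "\<forall>i. -e \<le> ov$i \<and> \<bar>ov$i\<bar> \<le> R"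
    and bs: "\<forall>i. -e \<le> s$i \<and> \<bar>s$i\<bar> \<le> R"
    and bx: "\<forall>i. -e \<le> x$i \<and> \<bar>x$i\<bar> \<le> R"
    and br: "\<forall>i. -e \<le> r$i \<and> \<bar>r$i\<bar> \<le> R"
    and bv: "\<forall>i. -e \<le> v$i \<and> \<bar>v$i\<bar> \<le> R"
begin

abbreviation "hv \<equiv> Hmat Hmin DH ov *v v"
abbreviation "bH i \<equiv> 2*kdeg DH i*R + kdeg Hmin i"
abbreviation "QH i \<equiv> kdeg DH i*R*R + kdeg Hmin i*R"

lemma hvl: "-(bH i*e) \<le> hv$i" using hv_bounds(1)[OF H1 H2 e R bo bv] .
lemma hvu: "\<bar>hv$i\<bar> \<le> QH i" using hv_bounds(2)[OF H1 H2 e R bo bv] .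
lemma kA: "kdeg A i \<ge> 0" using kdeg_nn A by blast
lemma kB: "kdeg B i \<ge> 0" using kdeg_nn B by blast
lemma kD: "kdeg DH i \<ge> 0" using kdeg_nn H2 by blast
lemma kH: "kdeg Hmin i \<ge> 0" using kdeg_nn H1 by blast
lemma bHn: "bH i \<ge> 0" using kD kH R by simp
lemma QHn: "QH i \<ge> 0" using kD kH R by simp

lemma o_lb:
  assumes "ov$i \<le> 0"
  shows "-(2*kdeg A i)*e \<le> (A *v (x - ov) - 2 *\<^sub>R (Lap A *v ov))$i"
proof -
  have "-(kdeg A i)*e \<le> (A *v x)$i" using mv_lb[OF A] bx by blast
  moreover have "-(kdeg A i)*e \<le> (A *v ov)$i" using mv_lb[OF A] bo by blast
  moreover have "kdeg A i * ov$i \<le> 0" using kA assms by (simp add: mult_nonneg_nonpos)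
  ultimately show ?thesis
    by (simp add: lap_comp matrix_vector_mult_diff_distrib algebra_simps)
qed

lemma x_lb:
  assumes "x$i \<le> 0"
  shows "-(2*kdeg B i*R)*e \<le> (diagm s *v (B *v x) - diagm \<gamma> *v x)$i"
proof -
  have "-(e*(kdeg B i*R) + (kdeg B i*e)*R) \<le> s$i * (B *v x)$i"
    using bs mv_lb[OF B] bx mv_ub[OF B] e kB by (intro prod_lb) auto
  moreover have "\<gamma>$i * x$i \<le> 0" using g assms by (simp add: mult_nonneg_nonpos)
  ultimately show ?thesis by (simp add: algebra_simps)
qed

lemma s_lb:
  assumes "s$i \<le> 0"
  shows "-(\<delta>$i + \<omega>$i + (kdeg B i + bH i)*R)*e \<le>
     (diagm \<delta> *v v - diagm s *v (B *v x + hv) + diagm \<omega> *v r)$i"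
proof -
  have a1: "-(kdeg B i)*e \<le> (B *v x)$i" using mv_lb[OF B] bx by blast
  have a2: "-((kdeg B i + bH i)*e) = -(kdeg B i)*e + -(bH i*e)" by (simp add: algebra_simps)
  have q1: "-((kdeg B i + bH i)*e) \<le> (B *v x + hv)$i"
    using a1 a2 hvl[of i] by simp
  have q2: "\<bar>(B *v x + hv)$i\<bar> \<le> kdeg B i * R + QH i"
  proof -
    have "\<bar>(B *v x)$i\<bar> \<le> kdeg B i * R" using mv_ub[OF B] bx by blast
    moreover have "\<bar>(B *v x)$i + hv$i\<bar> \<le> \<bar>(B *v x)$i\<bar> + \<bar>hv$i\<bar>" by (rule abs_triangle_ineq)
    ultimately show ?thesis using hvu[of i] by simp
  qed
  have "-(0*(kdeg B i * R + QH i) + ((kdeg B i + bH i)*e)*R) \<le> (-s$i) * (B *v x + hv)$i"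
    using assms bs[rule_format, of i] q1 q2 e kB bHn[of i] by (intro prod_lb) auto
  moreover have "-\<delta>$i*e \<le> \<delta>$i * v$i" using d[rule_format, of i] bv[rule_format, of i] mult_left_mono[of "-e" "v$i" "\<delta>$i"] by simp
  moreover have "-\<omega>$i*e \<le> \<omega>$i * r$i" using w[rule_format, of i] br[rule_format, of i] mult_left_mono[of "-e" "r$i" "\<omega>$i"] by simp
  ultimately show ?thesis by (simp add: algebra_simps)
qed

lemma r_lb:
  assumes "r$i \<le> 0"
  shows "-(\<gamma>$i + bH i*R)*e \<le> (diagm \<gamma> *v x - diagm \<omega> *v r - diagm r *v hv)$i"
proof -
  have "-(0*QH i + (bH i*e)*R) \<le> (-r$i) * hv$i"
    using assms br[rule_format, of i] hvl[of i] hvu[of i] e bHn[of i] by (intro prod_lb) auto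
  moreover have "-\<gamma>$i*e \<le> \<gamma>$i * x$i" using g[rule_format, of i] bx[rule_format, of i] mult_left_mono[of "-e" "x$i" "\<gamma>$i"] by simp
  moreover have "\<omega>$i * r$i \<le> 0" using w assms by (simp add: mult_nonneg_nonpos)
  ultimately show ?thesis by (simp add: algebra_simps)
qed

lemma v_lb:
  assumes "v$i \<le> 0"
  shows "-(2*QH i + bH i*(2*R))*e \<le> ((diagm s + diagm r) *v hv - diagm \<delta> *v v)$i"
proof -
  have "-((2*e)*QH i + (bH i*e)*(2*R)) \<le> (s$i + r$i) * hv$i"
  proof (rule prod_lb)
    show "- (2 * e) \<le> s $ i + r $ i" using bs[rule_format, of i] br[rule_format, of i] by linarith
    show "\<bar>s $ i + r $ i\<bar> \<le> 2 * R" using bs[rule_format, of i] br[rule_format, of i] by linarith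
  qed (use hvl[of i] hvu[of i] e bHn[of i] in auto)
  moreover have "\<delta>$i * v$i \<le> 0" using d assms by (simp add: mult_nonneg_nonpos)
  ultimately show ?thesis by (simp add: diag_add algebra_simps)
qed

end


theorem lemma1:
  fixes A B Hmin DH :: "real^'n^'n::finite"
    and \<gamma> \<omega> \<delta> :: "real^'n"
    and t0 :: real
    and op s x r v :: "real \<Rightarrow> real^'n"
  assumes "\<forall>i j. A$i$j \<ge> 0" and "\<forall>i j. B$i$j \<ge> 0"
    and "\<forall>i j. Hmin$i$j \<ge> 0" and "\<forall>i j. DH$i$j \<ge> 0"
    and "\<forall>i. \<gamma>$i \<ge> 0" and "\<forall>i. \<omega>$i \<ge> 0" and "\<forall>i. \<delta>$i \<ge> 0"
    and "sirsvo_solution A B \<gamma> \<omega> \<delta> Hmin DH t0 op s x r v"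
    and "\<forall>i. op t0 $ i \<in> {0..1} \<and> s t0 $ i \<in> {0..1} \<and> x t0 $ i \<in> {0..1}
              \<and> r t0 $ i \<in> {0..1} \<and> v t0 $ i \<in> {0..1}"
    and "\<forall>i. s t0 $ i + x t0 $ i + r t0 $ i + v t0 $ i = 1"
  shows "\<forall>t>t0. \<forall>i. s t $ i + x t $ i + r t $ i + v t $ i = 1 \<and>
           s t $ i \<in> {0..1} \<and> x t $ i \<in> {0..1} \<and> r t $ i \<in> {0..1} \<and> v t $ i \<in> {0..1}"
proof -
  note sol = assms(8)[unfolded sirsvo_solution_def]
  define Fo where "Fo t = A *v (x t - op t) - 2 *\<^sub>R (Lap A *v op t)" for t
  define Fs where "Fs t = diagm \<delta> *v v t - diagm (s t) *v (B *v x t + Hmat Hmin DH (op t) *v v t)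
     + diagm \<omega> *v r t" for t
  define Fx where "Fx t = diagm (s t) *v (B *v x t) - diagm \<gamma> *v x t" for t
  define Fr where "Fr t = diagm \<gamma> *v x t - diagm \<omega> *v r t - diagm (r t) *v (Hmat Hmin DH (op t) *v v t)" for t
  define Fv where "Fv t = (diagm (s t) + diagm (r t)) *v (Hmat Hmin DH (op t) *v v t) - diagm \<delta> *v v t" for t
  have dO: "(op has_vector_derivative Fo t) (at t within {t0..})" if "t \<ge> t0" for t
    using sol that unfolding Fo_def by blast
  have dS: "(s has_vector_derivative Fs t) (at t within {t0..})" if "t \<ge> t0" for t
    using sol that unfolding Fs_def by blast
  have dX: "(x has_vector_derivative Fx t) (at t within {t0..})" if "t \<ge> t0" for t
    using sol that unfolding Fx_def by blast
  have dR: "(r has_vector_derivative Fr t) (at t within {t0..})" if "t \<ge> t0" for t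
    using sol that unfolding Fr_def by blast
  have dV: "(v has_vector_derivative Fv t) (at t within {t0..})" if "t \<ge> t0" for t
    using sol that unfolding Fv_def by blast
  have cons: "s t $ i + x t $ i + r t $ i + v t $ i = 1" if "t \<ge> t0" for t i
  proof -
    let ?g = "\<lambda>t. s t $ i + x t $ i + r t $ i + v t $ i"
    have "(?g has_real_derivative 0) (at \<tau> within {t0..})" if "\<tau> \<in> {t0..}" for \<tau>
    proof -
      have "\<tau> \<ge> t0" using that by simp
      hence "(?g has_real_derivative (Fs \<tau>$i + Fx \<tau>$i + Fr \<tau>$i + Fv \<tau>$i)) (at \<tau> within {t0..})"
        by (intro DERIV_add comp_deriv dS dX dR dV)
      moreover have "Fs \<tau>$i + Fx \<tau>$i + Fr \<tau>$i + Fv \<tau>$i = 0"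
        unfolding Fs_def Fx_def Fr_def Fv_def by (simp add: diag_add algebra_simps)
      ultimately show ?thesis by simp
    qed
    then obtain c where c: "\<forall>\<tau>\<in>{t0..}. ?g \<tau> = c"
      using has_field_derivative_zero_constant[OF convex_real_interval(1)] by blast
    have "?g t0 = 1" using assms(10) by simp
    hence "c = 1" using c by simp
    thus ?thesis using c that by simp
  qed
  define Y where "Y c = (if c = (0::nat) then op else if c = 1 then s else if c = 2 then x
     else if c = 3 then r else v)" for c
  define F where "F c = (if c = (0::nat) then Fo else if c = 1 then Fs else if c = 2 then Fx
     else if c = 3 then Fr else Fv)" for c
  define K where "K = {..<(5::nat)} \<times> (UNIV :: 'n set)"
  define y where "y k t = Y (fst k) t $ snd k" for k t
  define f where "f k t = F (fst k) t $ snd k" for k t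
  have c5: "c = 0 \<or> c = 1 \<or> c = 2 \<or> c = 3 \<or> c = 4" if "c < (5::nat)" for c
    using that by auto
  have fin: "finite K" unfolding K_def by simp
  have der: "(y k has_real_derivative f k t) (at t within {t0..})" if kK: "k \<in> K" and tt: "t \<ge> t0" for k t
  proof -
    obtain c i where k: "k = (c,i)" and c: "c < 5" using kK unfolding K_def by auto
    have yk: "y k = (\<lambda>t. Y c t $ i)" unfolding y_def k by auto
    show ?thesis unfolding yk f_def using c5[OF c]
      by (auto simp: k Y_def F_def intro!: comp_deriv dO dS dX dR dV tt)
  qed
  have init: "y k t0 \<ge> 0" if kK: "k \<in> K" for k
  proof -
    obtain c i where k: "k = (c,i)" and c: "c < 5" using kK unfolding K_def by auto
    show ?thesis unfolding y_def k using c5[OF c] assms(9)[rule_format, of i]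
      by (auto simp: Y_def)
  qed
  have qp: "\<exists>C\<ge>0. \<forall>t\<ge>t0. \<forall>\<epsilon>\<ge>0.
      (\<forall>j\<in>K. -\<epsilon> \<le> y j t \<and> \<bar>y j t\<bar> \<le> R) \<longrightarrow> y k t \<le> 0 \<longrightarrow> -C*\<epsilon> \<le> f k t"
    if R: "R \<ge> 0" and kK: "k \<in> K" for R k
  proof -
    obtain c i where k: "k = (c,i)" and c: "c < 5" using kK unfolding K_def by auto
    define bH where "bH = 2*kdeg DH i*R + kdeg Hmin i"
    define QH where "QH = kdeg DH i*R*R + kdeg Hmin i*R"
    define C0 where "C0 = (if c = 0 then 2*kdeg A i else if c = 1 then \<delta>$i + \<omega>$i + (kdeg B i + bH)*R
      else if c = 2 then 2*kdeg B i*R else if c = 3 then \<gamma>$i + bH*R else 2*QH + bH*(2*R))"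
    show ?thesis
    proof (intro exI[of _ "\<bar>C0\<bar>"] conjI allI impI)
      show "\<bar>C0\<bar> \<ge> 0" by simp
      fix t \<epsilon> assume t: "t \<ge> t0" and e: "\<epsilon> \<ge> 0"
        and hyp: "\<forall>j\<in>K. -\<epsilon> \<le> y j t \<and> \<bar>y j t\<bar> \<le> R" and neg: "y k t \<le> 0"
      have bY: "-\<epsilon> \<le> Y c' t $ i' \<and> \<bar>Y c' t $ i'\<bar> \<le> R" if "c' < 5" for c' i'
      proof -
        have "(c', i') \<in> K" unfolding K_def using that by simp
        thus ?thesis using hyp unfolding y_def by fastforce
      qed
      interpret b: bnds A B Hmin DH \<gamma> \<omega> \<delta> \<epsilon> R "op t" "s t" "x t" "r t" "v t"
      proof (unfold_locales)
        show "\<forall>i. - \<epsilon> \<le> op t $ i \<and> \<bar>op t $ i\<bar> \<le> R" using bY[of 0] by (simp add: Y_def)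
        show "\<forall>i. - \<epsilon> \<le> s t $ i \<and> \<bar>s t $ i\<bar> \<le> R" using bY[of 1] by (simp add: Y_def)
        show "\<forall>i. - \<epsilon> \<le> x t $ i \<and> \<bar>x t $ i\<bar> \<le> R" using bY[of 2] by (simp add: Y_def)
        show "\<forall>i. - \<epsilon> \<le> r t $ i \<and> \<bar>r t $ i\<bar> \<le> R" using bY[of 3] by (simp add: Y_def)
        show "\<forall>i. - \<epsilon> \<le> v t $ i \<and> \<bar>v t $ i\<bar> \<le> R" using bY[of 4] by (simp add: Y_def)
      qed (use assms(1-7) e R in auto)
      have "-C0*\<epsilon> \<le> f k t"
        using c5[OF c]
      proof (elim disjE)
        assume "c = 0" thus ?thesis using b.o_lb[of i] neg unfolding C0_def f_def y_def k
          by (simp add: F_def Y_def Fo_def)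
      next
        assume "c = 1" thus ?thesis using b.s_lb[of i] neg unfolding C0_def f_def y_def k bH_def
          by (simp add: F_def Y_def Fs_def)
      next
        assume "c = 2" thus ?thesis using b.x_lb[of i] neg unfolding C0_def f_def y_def k
          by (simp add: F_def Y_def Fx_def)
      next
        assume "c = 3" thus ?thesis using b.r_lb[of i] neg unfolding C0_def f_def y_def k bH_def
          by (simp add: F_def Y_def Fr_def)
      next
        assume "c = 4" thus ?thesis using b.v_lb[of i] neg unfolding C0_def f_def y_def k bH_def QH_def
          by (simp add: F_def Y_def Fv_def)
      qed
      moreover have "-\<bar>C0\<bar>*\<epsilon> \<le> -C0*\<epsilon>" using e by (simp add: mult_right_mono)
      ultimately show "-\<bar>C0\<bar>*\<epsilon> \<le> f k t" by linarith
    qed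
  qed
  have nn: "Y c t $ i \<ge> 0" if "c < 5" "t \<ge> t0" for c t i
  proof -
    have "(c,i) \<in> K" unfolding K_def using that by simp
    from invariance[OF fin der init qp this that(2)] show ?thesis unfolding y_def by simp
  qed
  show ?thesis
  proof (intro allI impI)
    fix t i assume "t > t0"
    hence t: "t \<ge> t0" by simp
    have "s t $ i \<ge> 0" "x t $ i \<ge> 0" "r t $ i \<ge> 0" "v t $ i \<ge> 0"
      using nn[OF _ t, of 1 i] nn[OF _ t, of 2 i] nn[OF _ t, of 3 i] nn[OF _ t, of 4 i]
      by (simp_all add: Y_def)
    thus "s t $ i + x t $ i + r t $ i + v t $ i = 1 \<and>
           s t $ i \<in> {0..1} \<and> x t $ i \<in> {0..1} \<and> r t $ i \<in> {0..1} \<and> v t $ i \<in> {0..1}"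
      using cons[OF t, of i] by auto
  qed
qed


end
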